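(* Let $W\in\mathbb{R}^{n\times n}$ be the signed adjacency matrix of a signed digraph with $W\mathbf{1}=\mathbf{1}$. If $W$ is eventually stochastic, or if $W$ is weight balanced ($W^\top\mathbf{1}=\mathbf{1}$) with the eigenvalue $1$ simple and strictly dominant, then $W$ is irreducible (equivalently, the digraph is strongly connected).
   Context: $W$ is a real matrix (entries of any sign); the digraph has an edge from $j$ to $i$ iff $W_{ij}\neq0$. $W$ is eventually positive if there is $t_0\in\mathbb{Z}_{\ge0}$ with $W^t$ entrywise positive for all integers $t\ge t_0$; eventually stochastic means eventually positive and $W\mathbf{1}=\mathbf{1}$. "The eigenvalue $1$ is simple and strictly dominant" means $1$ has algebraic multiplicity one and $|\lambda|<1$ for every other eigenvalue. $W$ is irreducible if there is no permutation matrix $P$ with $P^\top WP$ block upper triangular with two nontrivial square diagonal blocks. *)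

theory Defs
  imports "Jordan_Normal_Form.Char_Poly" "HOL-Computational_Algebra.Polynomial"
begin

definition ones_vec :: "nat \<Rightarrow> real vec" where
  "ones_vec n = vec n (\<lambda>_. 1)"

definition eventually_positive :: "nat \<Rightarrow> real mat \<Rightarrow> bool" where
  "eventually_positive n W \<longleftrightarrow>
     (\<exists>t0::nat. \<forall>t\<ge>t0. \<forall>i<n. \<forall>j<n. (W ^\<^sub>m t) $$ (i, j) > 0)"

definition eventually_stochastic :: "nat \<Rightarrow> real mat \<Rightarrow> bool" where
  "eventually_stochastic n W \<longleftrightarrow>
     eventually_positive n W \<and> W *\<^sub>v ones_vec n = ones_vec n"

definition one_simple_strictly_dominant :: "real mat \<Rightarrow> bool" where
  "one_simple_strictly_dominant W \<longleftrightarrow>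
     (let Wc = map_mat complex_of_real W in
        order 1 (char_poly Wc) = 1 \<and>
        (\<forall>z. eigenvalue Wc z \<and> z \<noteq> 1 \<longrightarrow> cmod z < 1))"

definition permutation_mat :: "nat \<Rightarrow> real mat \<Rightarrow> bool" where
  "permutation_mat n P \<longleftrightarrow> P \<in> carrier_mat n n \<and>
     (\<forall>i<n. \<forall>j<n. P $$ (i, j) = 0 \<or> P $$ (i, j) = 1) \<and>
     (\<forall>i<n. \<exists>!j. j < n \<and> P $$ (i, j) = 1) \<and>
     (\<forall>j<n. \<exists>!i. i < n \<and> P $$ (i, j) = 1)"

definition reducible_mat :: "nat \<Rightarrow> real mat \<Rightarrow> bool" where
  "reducible_mat n W \<longleftrightarrow>
     (\<exists>P k. permutation_mat n P \<and> 0 < k \<and> k < n \<and>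
        (\<forall>i j. k \<le> i \<and> i < n \<and> j < k \<longrightarrow>
           (transpose_mat P * W * P) $$ (i, j) = 0))"

definition irreducible_mat :: "nat \<Rightarrow> real mat \<Rightarrow> bool" where
  "irreducible_mat n W \<longleftrightarrow> \<not> reducible_mat n W"

end

theory Submission
  imports Defs "Jordan_Normal_Form.Schur_Decomposition"
begin

lemma permD_all: assumes "permutation_mat n P"
  shows "P \<in> carrier_mat n n \<and>
     (\<forall>i<n. \<forall>j<n. P $$ (i, j) = 0 \<or> P $$ (i, j) = 1) \<and>
     (\<forall>i<n. \<exists>!j. j < n \<and> P $$ (i, j) = 1) \<and>
     (\<forall>j<n. \<exists>!i. i < n \<and> P $$ (i, j) = 1)" using assms unfolding permutation_mat_def .

lemma permD_carrier: "permutation_mat n P \<Longrightarrow> P \<in> carrier_mat n n"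
  using permD_all by (rule conjunct1)
lemma permD_01: "permutation_mat n P \<Longrightarrow> i<n \<Longrightarrow> j<n \<Longrightarrow> P$$(i,j)=0 \<or> P$$(i,j)=1"
  using conjunct1[OF conjunct2[OF permD_all]] by blast
lemma permD_row: "permutation_mat n P \<Longrightarrow> i<n \<Longrightarrow> \<exists>!j. j<n \<and> P$$(i,j)=1"
  using conjunct1[OF conjunct2[OF conjunct2[OF permD_all]]] by blast
lemma permD_col: "permutation_mat n P \<Longrightarrow> j<n \<Longrightarrow> \<exists>!i. i<n \<and> P$$(i,j)=1"
  using conjunct2[OF conjunct2[OF conjunct2[OF permD_all]]] by blast

lemma ex1_uniq: "\<exists>!x. Q x \<Longrightarrow> Q a \<Longrightarrow> Q b \<Longrightarrow> a = b" by blast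

definition psig :: "nat \<Rightarrow> real mat \<Rightarrow> nat \<Rightarrow> nat" where
  "psig n P j = (SOME a. a < n \<and> P $$ (a, j) = 1)"

lemma psig_props:
  assumes P: "permutation_mat n P" and j: "j < n"
  shows "psig n P j < n" "P $$ (psig n P j, j) = 1"
    "\<And>l. l < n \<Longrightarrow> l \<noteq> psig n P j \<Longrightarrow> P $$ (l, j) = 0"
proof -
  from permD_col[OF P j] obtain a where a: "a < n" "P $$ (a, j) = 1"
    by blast
  hence ex: "\<exists>a. a < n \<and> P $$ (a, j) = 1" by blast
  have s: "psig n P j < n \<and> P $$ (psig n P j, j) = 1"
    unfolding psig_def by (rule someI_ex[OF ex])
  thus "psig n P j < n" "P $$ (psig n P j, j) = 1" by auto
  fix l assume l: "l < n" "l \<noteq> psig n P j"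
  have "P $$ (l, j) \<noteq> 1"
  proof
    assume "P $$ (l, j) = 1"
    hence "l = psig n P j" using ex1_uniq[OF permD_col[OF P j], of l "psig n P j"] l s by auto
    with l show False by simp
  qed
  with permD_01[OF P l(1) j] show "P $$ (l, j) = 0" by simp
qed

lemma psig_inj: assumes P: "permutation_mat n P"
  shows "inj_on (psig n P) {..<n}"
proof (rule inj_onI)
  fix i j assume i: "i \<in> {..<n}" and j: "j \<in> {..<n}" and e: "psig n P i = psig n P j"
  have a: "psig n P i < n" "P $$ (psig n P i, i) = 1" "P $$ (psig n P i, j) = 1"
    using psig_props(1,2)[OF P, of i] psig_props(2)[OF P, of j] i j e by auto
  show "i = j" by (rule ex1_uniq[OF permD_row[OF P a(1)]], insert a i j, auto)
qed

lemma psig_image: assumes P: "permutation_mat n P"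
  shows "psig n P ` {..<n} = {..<n}"
proof -
  have sub: "psig n P ` {..<n} \<subseteq> {..<n}" using psig_props(1)[OF P] by auto
  show ?thesis by (rule endo_inj_surj[OF _ sub psig_inj[OF P]], simp)
qed

lemma psig_reindex: assumes P: "permutation_mat n P"
  shows "(\<Sum>l\<in>{0..<n}. g (psig n P l)) = (\<Sum>b\<in>{0..<n}. (g b :: 'a :: comm_monoid_add))"
proof -
  have "(\<Sum>b\<in>{..<n}. g b) = (\<Sum>b\<in>psig n P ` {..<n}. g b)" using psig_image[OF P] by simp
  also have "\<dots> = (\<Sum>l\<in>{..<n}. g (psig n P l))" by (rule sum.reindex[OF psig_inj[OF P], unfolded comp_def])
  finally show ?thesis by (simp add: atLeast0LessThan)
qed

lemma perm_sum_col:
  assumes P: "permutation_mat n P" and j: "j < n"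
  shows "(\<Sum>l\<in>{0..<n}. (of_real (P $$ (l, j)) :: 'a :: real_field) * f l) = f (psig n P j)"
proof -
  have "(\<Sum>l\<in>{0..<n}. (of_real (P $$ (l, j)) :: 'a) * f l)
      = (\<Sum>l\<in>{0..<n}. if l = psig n P j then f (psig n P j) else 0)"
    by (rule sum.cong, auto simp: psig_props[OF P j])
  also have "\<dots> = f (psig n P j)" using psig_props(1)[OF P j] by simp
  finally show ?thesis .
qed

lemma perm_sum_col':
  assumes P: "permutation_mat n P" and j: "j < n"
  shows "(\<Sum>l\<in>{0..<n}. f l * (of_real (P $$ (l, j)) :: 'a :: real_field)) = f (psig n P j)"
  using perm_sum_col[OF P j, of f] by (simp add: mult.commute)

lemma perm_entry:
  fixes M :: "'a :: real_field mat"
  assumes P: "permutation_mat n P" and M: "M \<in> carrier_mat n n" and i: "i < n" and j: "j < n"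
  shows "(transpose_mat (map_mat of_real P) * M * map_mat of_real P) $$ (i, j)
     = M $$ (psig n P i, psig n P j)"
proof -
  have Pc: "P \<in> carrier_mat n n" using permD_carrier[OF P] .
  let ?Q = "map_mat (of_real :: real \<Rightarrow> 'a) P"
  define TM where "TM = transpose_mat ?Q * M"
  have TMc: "TM \<in> carrier_mat n n" unfolding TM_def using Pc M by auto
  have inner: "TM $$ (i, b) = M $$ (psig n P i, b)" if b: "b < n" for b
  proof -
    have "TM $$ (i, b) = (\<Sum>l\<in>{0..<n}. of_real (P $$ (l, i)) * M $$ (l, b))"
      unfolding TM_def using Pc M i b by (simp add: scalar_prod_def)
    also have "\<dots> = M $$ (psig n P i, b)" by (rule perm_sum_col[OF P i])
    finally show ?thesis .
  qed
  have "(transpose_mat ?Q * M * ?Q) $$ (i, j) = (TM * ?Q) $$ (i, j)" unfolding TM_def by simp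
  also have "\<dots> = (\<Sum>b\<in>{0..<n}. TM $$ (i, b) * of_real (P $$ (b, j)))"
    using Pc TMc i j by (simp add: scalar_prod_def)
  also have "\<dots> = (\<Sum>b\<in>{0..<n}. M $$ (psig n P i, b) * of_real (P $$ (b, j)))"
    by (rule sum.cong, auto simp: inner)
  also have "\<dots> = M $$ (psig n P i, psig n P j)" by (rule perm_sum_col'[OF P j])
  finally show ?thesis .
qed

lemma perm_TP:
  assumes P: "permutation_mat n P"
  shows "transpose_mat (map_mat (of_real :: real \<Rightarrow> 'a :: real_field) P) * map_mat of_real P = 1\<^sub>m n"
proof -
  have Pc: "P \<in> carrier_mat n n" using permD_carrier[OF P] .
  let ?Q = "map_mat (of_real :: real \<Rightarrow> 'a) P"
  show ?thesis
  proof (rule eq_matI)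
    fix i j assume i: "i < dim_row (1\<^sub>m n :: 'a mat)" and j: "j < dim_col (1\<^sub>m n :: 'a mat)"
    hence i: "i < n" and j: "j < n" by auto
    have "(transpose_mat ?Q * ?Q) $$ (i, j) = (\<Sum>l\<in>{0..<n}. of_real (P $$ (l, i)) * of_real (P $$ (l, j)))"
      using Pc i j by (simp add: scalar_prod_def)
    also have "\<dots> = of_real (P $$ (psig n P i, j))" by (rule perm_sum_col[OF P i])
    also have "\<dots> = (1\<^sub>m n :: 'a mat) $$ (i, j)"
    proof (cases "i = j")
      case True thus ?thesis using psig_props[OF P i] i by simp
    next
      case False
      have a: "psig n P i < n" "P $$ (psig n P i, i) = 1" using psig_props[OF P i] by auto
      have "P $$ (psig n P i, j) \<noteq> 1"
      proof
        assume "P $$ (psig n P i, j) = 1"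
        hence "i = j" using ex1_uniq[OF permD_row[OF P a(1)], of i j] a i j by auto
        with False show False by simp
      qed
      with permD_01[OF P a(1) j] have "P $$ (psig n P i, j) = 0" by simp
      thus ?thesis using False i j by simp
    qed
    finally show "(transpose_mat ?Q * ?Q) $$ (i, j) = (1\<^sub>m n :: 'a mat) $$ (i, j)" .
  next
    show "dim_row (transpose_mat ?Q * ?Q) = dim_row (1\<^sub>m n :: 'a mat)" using Pc by simp
  next
    show "dim_col (transpose_mat ?Q * ?Q) = dim_col (1\<^sub>m n :: 'a mat)" using Pc by simp
  qed
qed

lemma split_sum: assumes "k \<le> (n::nat)" shows "(\<Sum>l\<in>{0..<n}. f l) = (\<Sum>l\<in>{0..<k}. f l) + (\<Sum>j\<in>{0..<n-k}. (f (j+k) :: 'a::comm_monoid_add))"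
proof -
  have "{0..<n} = {0..<k} \<union> {k..<n}" using assms by auto
  hence "(\<Sum>l\<in>{0..<n}. f l) = (\<Sum>l\<in>{0..<k}. f l) + (\<Sum>l\<in>{k..<n}. f l)" by (simp add: sum.union_disjoint)
  also have "(\<Sum>l\<in>{k..<n}. f l) = (\<Sum>j\<in>{0..<n-k}. f (j+k))"
    using sum.shift_bounds_nat_ivl[of f 0 k "n-k"] assms by simp
  finally show ?thesis .
qed

lemma map_of_real_real: "map_mat (of_real :: real \<Rightarrow> real) P = P"
  by (rule eq_matI, auto)

lemma pow_zero_block:
  assumes P: "permutation_mat n P" and W: "W \<in> carrier_mat n n"
    and Z: "\<And>i j. k \<le> i \<Longrightarrow> i < n \<Longrightarrow> j < k \<Longrightarrow> W $$ (psig n P i, psig n P j) = 0"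
    and kn: "k \<le> n"
  shows "k \<le> i \<Longrightarrow> i < n \<Longrightarrow> j < k \<Longrightarrow> (W ^\<^sub>m t) $$ (psig n P i, psig n P j) = 0"
proof (induction t arbitrary: i j)
  case 0
  have "psig n P i \<noteq> psig n P j"
    using psig_inj[OF P] 0 kn unfolding inj_on_def by (metis lessThan_iff less_le_trans not_le order_less_trans)
  thus ?case using W 0 psig_props(1)[OF P, of i] psig_props(1)[OF P, of j] kn by simp
next
  case (Suc t)
  let ?s = "psig n P"
  have Wt: "W ^\<^sub>m t \<in> carrier_mat n n" using W by simp
  have si: "?s i < n" and sj: "?s j < n" using psig_props(1)[OF P] Suc.prems kn by auto
  have "(W ^\<^sub>m Suc t) $$ (?s i, ?s j) = (\<Sum>b\<in>{0..<n}. (W ^\<^sub>m t) $$ (?s i, b) * W $$ (b, ?s j))"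
    using Wt W si sj by (simp add: scalar_prod_def)
  also have "\<dots> = (\<Sum>l\<in>{0..<n}. (W ^\<^sub>m t) $$ (?s i, ?s l) * W $$ (?s l, ?s j))"
    by (rule psig_reindex[OF P, symmetric])
  also have "\<dots> = 0"
  proof (rule sum.neutral, intro ballI)
    fix l assume l: "l \<in> {0..<n}"
    show "(W ^\<^sub>m t) $$ (?s i, ?s l) * W $$ (?s l, ?s j) = 0"
    proof (cases "l < k")
      case True thus ?thesis using Suc.IH[of i l] Suc.prems by simp
    next
      case False thus ?thesis using Z[of l j] Suc.prems l by simp
    qed
  qed
  finally show ?case .
qed

theorem lemma7:
  fixes W :: "real mat" and n :: nat
  assumes "W \<in> carrier_mat n n"
    and "W *\<^sub>v ones_vec n = ones_vec n"
    and "eventually_stochastic n W \<or>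
         (transpose_mat W *\<^sub>v ones_vec n = ones_vec n \<and> one_simple_strictly_dominant W)"
  shows "irreducible_mat n W"
proof -
  note W = assms(1)
  {
    assume "reducible_mat n W"
    then obtain P k where P: "permutation_mat n P" and k0: "0 < k" and kn: "k < n"
      and Z0: "\<And>i j. k \<le> i \<Longrightarrow> i < n \<Longrightarrow> j < k \<Longrightarrow> (transpose_mat P * W * P) $$ (i, j) = 0"
      unfolding reducible_mat_def by blast
    let ?s = "psig n P"
    have s: "\<And>i. i < n \<Longrightarrow> ?s i < n" using psig_props(1)[OF P] .
    have Bent: "\<And>i j. i < n \<Longrightarrow> j < n \<Longrightarrow> (transpose_mat P * W * P) $$ (i, j) = W $$ (?s i, ?s j)"
      using perm_entry[OF P W, unfolded map_of_real_real] .
    have Z: "\<And>i j. k \<le> i \<Longrightarrow> i < n \<Longrightarrow> j < k \<Longrightarrow> W $$ (?s i, ?s j) = 0"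
      using Z0 Bent kn by (metis order_less_trans)
    have False
    proof (cases "eventually_stochastic n W")
      case True
      then obtain t0 where pos: "\<And>i j. i < n \<Longrightarrow> j < n \<Longrightarrow> (W ^\<^sub>m t0) $$ (i, j) > 0"
        unfolding eventually_stochastic_def eventually_positive_def by blast
      have "(W ^\<^sub>m t0) $$ (?s k, ?s 0) = 0"
        by (rule pow_zero_block[OF P W Z], insert k0 kn, auto)
      moreover have "(W ^\<^sub>m t0) $$ (?s k, ?s 0) > 0" using pos s k0 kn by simp
      ultimately show False by simp
    next
      case False
      with assms(3) have bal: "transpose_mat W *\<^sub>v ones_vec n = ones_vec n"
        and dom: "one_simple_strictly_dominant W" by auto
      have rs0: "(\<Sum>b\<in>{0..<n}. W $$ (a, b)) = 1" if a: "a < n" for a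
      proof -
        have "(W *\<^sub>v ones_vec n) $ a = 1" using assms(2) a by (simp add: ones_vec_def)
        thus ?thesis using W a by (simp add: ones_vec_def scalar_prod_def)
      qed
      have cs0: "(\<Sum>b\<in>{0..<n}. W $$ (b, a)) = 1" if a: "a < n" for a
      proof -
        have "(transpose_mat W *\<^sub>v ones_vec n) $ a = 1" using bal a by (simp add: ones_vec_def)
        thus ?thesis using W a by (simp add: ones_vec_def scalar_prod_def)
      qed
      have rs: "(\<Sum>l\<in>{0..<n}. W $$ (?s i, ?s l)) = 1" if i: "i < n" for i
        using rs0[OF s[OF i]] psig_reindex[OF P, of "\<lambda>b. W $$ (?s i, b)"] by simp
      have cs: "(\<Sum>l\<in>{0..<n}. W $$ (?s l, ?s j)) = 1" if j: "j < n" for j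
        using cs0[OF s[OF j]] psig_reindex[OF P, of "\<lambda>b. W $$ (b, ?s j)"] by simp
      define m where "m = n - k"
      have nkm: "n = k + m" and m0: "0 < m" using kn unfolding m_def by auto
      have Drs: "(\<Sum>j\<in>{0..<m}. W $$ (?s (i+k), ?s (j+k))) = 1" if i: "i < m" for i
      proof -
        have "1 = (\<Sum>l\<in>{0..<n}. W $$ (?s (i+k), ?s l))" using rs[of "i+k"] i nkm by simp
        also have "\<dots> = (\<Sum>l\<in>{0..<k}. W $$ (?s (i+k), ?s l)) + (\<Sum>j\<in>{0..<m}. W $$ (?s (i+k), ?s (j+k)))"
          using split_sum[of k n] kn unfolding m_def by simp
        also have "(\<Sum>l\<in>{0..<k}. W $$ (?s (i+k), ?s l)) = 0"
          by (rule sum.neutral, insert Z i nkm, auto)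
        finally show ?thesis by simp
      qed
      have Acs: "(\<Sum>i\<in>{0..<k}. W $$ (?s i, ?s j)) = 1" if j: "j < k" for j
      proof -
        have "1 = (\<Sum>l\<in>{0..<n}. W $$ (?s l, ?s j))" using cs[of j] j kn by simp
        also have "\<dots> = (\<Sum>l\<in>{0..<k}. W $$ (?s l, ?s j)) + (\<Sum>i\<in>{0..<m}. W $$ (?s (i+k), ?s j))"
          using split_sum[of k n] kn unfolding m_def by simp
        also have "(\<Sum>i\<in>{0..<m}. W $$ (?s (i+k), ?s j)) = 0"
          by (rule sum.neutral, insert Z j nkm, auto)
        finally show ?thesis by simp
      qed
      let ?Wc = "map_mat complex_of_real W"
      let ?Pc = "map_mat (of_real :: real \<Rightarrow> complex) P"
      define Bc where "Bc = transpose_mat ?Pc * ?Wc * ?Pc"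
      have Pcar: "P \<in> carrier_mat n n" by (rule permD_carrier[OF P])
      have Pc: "?Pc \<in> carrier_mat n n" using Pcar by simp
      have PTc: "transpose_mat ?Pc \<in> carrier_mat n n" using Pcar by simp
      have Wc: "?Wc \<in> carrier_mat n n" using W by simp
      have Bcc: "Bc \<in> carrier_mat n n" unfolding Bc_def using Pcar W by simp
      have Bcent: "Bc $$ (i, j) = of_real (W $$ (?s i, ?s j))" if "i < n" "j < n" for i j
        unfolding Bc_def using perm_entry[OF P Wc that] s[OF that(1)] s[OF that(2)] W by simp
      have TP: "transpose_mat ?Pc * ?Pc = 1\<^sub>m n" by (rule perm_TP[OF P])
      have PT: "?Pc * transpose_mat ?Pc = 1\<^sub>m n" by (rule mat_mult_left_right_inverse[OF PTc Pc TP])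
      have "?Pc * Bc * transpose_mat ?Pc = ?Pc * (transpose_mat ?Pc * (?Wc * ?Pc)) * transpose_mat ?Pc"
        unfolding Bc_def using assoc_mult_mat[OF PTc Wc Pc] by simp
      also have "?Pc * (transpose_mat ?Pc * (?Wc * ?Pc)) = (?Pc * transpose_mat ?Pc) * (?Wc * ?Pc)"
        using assoc_mult_mat[OF Pc PTc mult_carrier_mat[OF Wc Pc]] by simp
      also have "\<dots> = ?Wc * ?Pc" unfolding PT using Wc Pc by simp
      also have "?Wc * ?Pc * transpose_mat ?Pc = ?Wc * (?Pc * transpose_mat ?Pc)"
        using assoc_mult_mat[OF Wc Pc PTc] .
      also have "\<dots> = ?Wc" unfolding PT using Wc by simp
      finally have simeq: "?Wc = ?Pc * Bc * transpose_mat ?Pc" by simp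
      have "similar_mat ?Wc Bc" unfolding similar_mat_def similar_mat_wit_def Let_def
        by (rule exI[of _ ?Pc], rule exI[of _ "transpose_mat ?Pc"], insert Wc Bcc Pc PTc PT TP simeq, auto)
      hence cpW: "char_poly ?Wc = char_poly Bc" by (rule char_poly_similar)
      define Ac where "Ac = mat k k (\<lambda>(i,j). Bc $$ (i,j))"
      define Cc where "Cc = mat k m (\<lambda>(i,j). Bc $$ (i,j+k))"
      define Dc where "Dc = mat m m (\<lambda>(i,j). Bc $$ (i+k,j+k))"
      have Acc: "Ac \<in> carrier_mat k k" and Ccc: "Cc \<in> carrier_mat k m" and Dcc: "Dc \<in> carrier_mat m m"
        unfolding Ac_def Cc_def Dc_def by auto
      have blk: "Bc = four_block_mat Ac Cc (0\<^sub>m m k) Dc"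
      proof (rule eq_matI)
        fix i j assume i: "i < dim_row (four_block_mat Ac Cc (0\<^sub>m m k) Dc)"
          and j: "j < dim_col (four_block_mat Ac Cc (0\<^sub>m m k) Dc)"
        hence i: "i < n" and j: "j < n" using Acc Dcc nkm by auto
        show "Bc $$ (i, j) = four_block_mat Ac Cc (0\<^sub>m m k) Dc $$ (i, j)"
        proof (cases "i < k")
          case True thus ?thesis using i j Acc Ccc Dcc nkm unfolding Ac_def Cc_def Dc_def by auto
        next
          case False
          show ?thesis
          proof (cases "j < k")
            case True
            have "Bc $$ (i, j) = 0" using Bcent[OF i j] Z[of i j] False True i by simp
            thus ?thesis using i j Acc Ccc Dcc nkm False True by simp
          next
            case False2: False
            thus ?thesis using i j Acc Ccc Dcc nkm False unfolding Ac_def Cc_def Dc_def by auto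
          qed
        qed
      qed (insert Bcc Acc Dcc nkm, auto)
      have cpB: "char_poly Bc = char_poly Ac * char_poly Dc"
        by (rule char_poly_0_block[OF blk _ _ Acc Ccc Dcc],
          insert char_poly_factorized[OF Acc] char_poly_factorized[OF Dcc], auto)
      define v where "v = vec m (\<lambda>_. 1 :: complex)"
      have "eigenvector Dc v 1" unfolding eigenvector_def
      proof (intro conjI)
        show "v \<in> carrier_vec (dim_row Dc)" using Dcc unfolding v_def by simp
        show "v \<noteq> 0\<^sub>v (dim_row Dc)"
        proof
          assume "v = 0\<^sub>v (dim_row Dc)"
          hence "v $ 0 = 0\<^sub>v (dim_row Dc) $ 0" by simp
          thus False using m0 Dcc unfolding v_def by simp
        qed
        show "Dc *\<^sub>v v = 1 \<cdot>\<^sub>v v"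
        proof (rule eq_vecI)
          fix i assume "i < dim_vec (1 \<cdot>\<^sub>v v)"
          hence i: "i < m" unfolding v_def by simp
          have "(Dc *\<^sub>v v) $ i = (\<Sum>j\<in>{0..<m}. Bc $$ (i+k, j+k))"
            using i unfolding Dc_def v_def by (simp add: scalar_prod_def)
          also have "\<dots> = (\<Sum>j\<in>{0..<m}. of_real (W $$ (?s (i+k), ?s (j+k))))"
            by (rule sum.cong, insert i nkm, auto simp: Bcent)
          also have "\<dots> = of_real (\<Sum>j\<in>{0..<m}. W $$ (?s (i+k), ?s (j+k)))" by (simp add: of_real_sum)
          also have "\<dots> = 1" using Drs[OF i] by simp
          finally show "(Dc *\<^sub>v v) $ i = (1 \<cdot>\<^sub>v v) $ i" using i unfolding v_def by simp
        qed (insert Dcc, auto simp: v_def)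
      qed
      hence "eigenvalue Dc 1" unfolding eigenvalue_def by blast
      hence rD: "poly (char_poly Dc) 1 = 0" using eigenvalue_root_char_poly[OF Dcc] by simp
      define u where "u = vec k (\<lambda>_. 1 :: complex)"
      have AT: "transpose_mat Ac \<in> carrier_mat k k" using Acc by simp
      have "eigenvector (transpose_mat Ac) u 1" unfolding eigenvector_def
      proof (intro conjI)
        show "u \<in> carrier_vec (dim_row (transpose_mat Ac))" using Acc unfolding u_def by simp
        show "u \<noteq> 0\<^sub>v (dim_row (transpose_mat Ac))"
        proof
          assume "u = 0\<^sub>v (dim_row (transpose_mat Ac))"
          hence "u $ 0 = 0\<^sub>v (dim_row (transpose_mat Ac)) $ 0" by simp
          thus False using k0 Acc unfolding u_def by simp
        qed
        show "transpose_mat Ac *\<^sub>v u = 1 \<cdot>\<^sub>v u"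
        proof (rule eq_vecI)
          fix j assume "j < dim_vec (1 \<cdot>\<^sub>v u)"
          hence j: "j < k" unfolding u_def by simp
          have "(transpose_mat Ac *\<^sub>v u) $ j = (\<Sum>i\<in>{0..<k}. Bc $$ (i, j))"
            using j unfolding Ac_def u_def by (simp add: scalar_prod_def)
          also have "\<dots> = (\<Sum>i\<in>{0..<k}. of_real (W $$ (?s i, ?s j)))"
            by (rule sum.cong, insert j kn, auto simp: Bcent)
          also have "\<dots> = of_real (\<Sum>i\<in>{0..<k}. W $$ (?s i, ?s j))" by (simp add: of_real_sum)
          also have "\<dots> = 1" using Acs[OF j] by simp
          finally show "(transpose_mat Ac *\<^sub>v u) $ j = (1 \<cdot>\<^sub>v u) $ j" using j unfolding u_def by simp
        qed (insert Acc, auto simp: u_def)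
      qed
      hence "eigenvalue (transpose_mat Ac) 1" unfolding eigenvalue_def by blast
      hence "poly (char_poly (transpose_mat Ac)) 1 = 0" using eigenvalue_root_char_poly[OF AT] by simp
      hence rA: "poly (char_poly Ac) 1 = 0" using char_poly_transpose_mat[OF Acc] by simp
      have nzA: "char_poly Ac \<noteq> 0" using degree_monic_char_poly[OF Acc] by auto
      have nzD: "char_poly Dc \<noteq> 0" using degree_monic_char_poly[OF Dcc] by auto
      have oA: "Polynomial.order 1 (char_poly Ac) \<noteq> 0" using rA nzA Polynomial.order_root by blast
      have oD: "Polynomial.order 1 (char_poly Dc) \<noteq> 0" using rD nzD Polynomial.order_root by blast
      have "Polynomial.order 1 (char_poly ?Wc) = Polynomial.order 1 (char_poly Ac) + Polynomial.order 1 (char_poly Dc)"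
        unfolding cpW cpB by (rule Polynomial.order_mult, insert nzA nzD, simp)
      with oA oD have "Polynomial.order 1 (char_poly ?Wc) \<noteq> 1" by simp
      with dom show False unfolding one_simple_strictly_dominant_def Let_def by simp
    qed
  }
  thus ?thesis unfolding irreducible_mat_def by blast
qed

end
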